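(* Let $\alpha,\beta\in[0,\pi/2]$ with $\alpha\neq\beta$ and $\alpha\neq\pi/2-\beta$. Define, in $\mathbb{C}^2\otimes\mathbb{C}^2$, $\ket{\phi^+_\theta}=\sin\theta\ket{00}+\cos\theta\ket{11}$, $\ket{\phi^-_\theta}=\cos\theta\ket{00}-\sin\theta\ket{11}$, $\ket{\psi^+_\theta}=\sin\theta\ket{01}+\cos\theta\ket{10}$, $\ket{\psi^-_\theta}=\cos\theta\ket{01}-\sin\theta\ket{10}$, and $\ket{a_1}=\ket{\phi^-_\alpha}$, $\ket{a_2}=\ket{\psi^-_\beta}$, $\ket{a_3}=\tfrac{1}{\sqrt2}(\ket{\phi^+_\alpha}+\ket{\psi^+_\beta})$, $\ket{a_4}=\tfrac{1}{\sqrt2}(\ket{\phi^+_\alpha}-\ket{\psi^+_\beta})$. Then for every choice of $i\neq j$ in $\{1,2,3,4\}$, the projector onto the two-dimensional subspace $\mathrm{Span}\{\ket{a_i},\ket{a_j}\}$ is entangled (i.e., not separable).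
   Context: $\{\ket{0},\ket{1}\}$ is the computational basis of $\mathbb{C}^2$ and $\ket{ab}=\ket{a}\otimes\ket{b}$. A positive operator on $\mathbb{C}^2\otimes\mathbb{C}^2$ is separable if it is a nonnegative combination of product operators $A\otimes B$ with $A,B\ge0$, and entangled otherwise. The states $\ket{a_1},\dots,\ket{a_4}$ form an orthonormal basis (the set $\mathcal{A}_{\pi/4}^{[\alpha,\beta]}$ in the paper). *)

theory Defs
  imports "HOL-Analysis.Analysis"
begin

text \<open>Qubit space C^2 is indexed by bool (False = |0>, True = |1>);
  C^2 (x) C^2 is indexed by bool \<times> bool, with |ab> the basis vector at index (a,b).\<close>

type_synonym qvec2 = "complex ^ (bool \<times> bool)"
type_synonym op1 = "complex ^ bool ^ bool"
type_synonym op2 = "complex ^ (bool \<times> bool) ^ (bool \<times> bool)"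

definition ket2 :: "bool \<Rightarrow> bool \<Rightarrow> qvec2" where
  "ket2 a b = (\<chi> p. if p = (a, b) then 1 else 0)"

definition kron :: "op1 \<Rightarrow> op1 \<Rightarrow> op2" where
  "kron A B = (\<chi> p q. A $ fst p $ fst q * B $ snd p $ snd q)"

definition cinner :: "complex ^ 'n \<Rightarrow> complex ^ 'n \<Rightarrow> complex" where
  "cinner u v = (\<Sum>i\<in>UNIV. cnj (u $ i) * v $ i)"

definition adjoint_mat :: "complex ^ 'n ^ 'n \<Rightarrow> complex ^ 'n ^ 'n" where
  "adjoint_mat A = (\<chi> i j. cnj (A $ j $ i))"

definition hermitian :: "complex ^ 'n ^ 'n \<Rightarrow> bool" where
  "hermitian A \<longleftrightarrow> adjoint_mat A = A"

definition psd :: "complex ^ 'n ^ 'n \<Rightarrow> bool" where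
  "psd A \<longleftrightarrow> (\<forall>v. cinner v (A *v v) \<in> \<real> \<and> 0 \<le> Re (cinner v (A *v v)))"

definition separable :: "op2 \<Rightarrow> bool" where
  "separable M \<longleftrightarrow> (\<exists>(n::nat) (c::nat \<Rightarrow> real) A B.
      (\<forall>k<n. 0 \<le> c k \<and> psd (A k) \<and> psd (B k)) \<and>
      M = (\<Sum>k<n. c k *\<^sub>R kron (A k) (B k)))"

definition span2 :: "qvec2 \<Rightarrow> qvec2 \<Rightarrow> qvec2 set" where
  "span2 u w = {x *s u + y *s w | x y. True}"

definition is_projector_onto :: "op2 \<Rightarrow> qvec2 set \<Rightarrow> bool" where
  "is_projector_onto P S \<longleftrightarrow> hermitian P \<and> P ** P = P \<and> range (\<lambda>v. P *v v) = S"

definition phi_plus :: "real \<Rightarrow> qvec2" where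
  "phi_plus t = complex_of_real (sin t) *s ket2 False False + complex_of_real (cos t) *s ket2 True True"
definition phi_minus :: "real \<Rightarrow> qvec2" where
  "phi_minus t = complex_of_real (cos t) *s ket2 False False - complex_of_real (sin t) *s ket2 True True"
definition psi_plus :: "real \<Rightarrow> qvec2" where
  "psi_plus t = complex_of_real (sin t) *s ket2 False True + complex_of_real (cos t) *s ket2 True False"
definition psi_minus :: "real \<Rightarrow> qvec2" where
  "psi_minus t = complex_of_real (cos t) *s ket2 False True - complex_of_real (sin t) *s ket2 True False"

definition basisA :: "real \<Rightarrow> real \<Rightarrow> nat \<Rightarrow> qvec2" where
  "basisA \<alpha> \<beta> i =
     (if i = 1 then phi_minus \<alpha>
      else if i = 2 then psi_minus \<beta>
      else if i = 3 then complex_of_real (1 / sqrt 2) *s (phi_plus \<alpha> + psi_plus \<beta>)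
      else complex_of_real (1 / sqrt 2) *s (phi_plus \<alpha> - psi_plus \<beta>))"

end

theory Submission imports Defs begin

lemma sum_bool: "sum f (UNIV::bool set) = f False + f True"
  by (simp add: UNIV_bool)

lemma UNIV_bb: "(UNIV::(bool\<times>bool) set) = {(False,False),(False,True),(True,False),(True,True)}"
  by auto

lemma sum_bb: "sum f (UNIV::(bool\<times>bool) set) = f (False,False) + f (False,True) + f (True,False) + f (True,True)"
  by (simp add: UNIV_bb add.assoc)

definition quad2 :: "complex \<Rightarrow> complex \<Rightarrow> complex \<Rightarrow> complex \<Rightarrow> complex \<Rightarrow> complex \<Rightarrow> complex" where
  "quad2 a b c d x y = cnj x * a * x + cnj x * b * y + cnj y * c * x + cnj y * d * y"

definition psd2 where
  "psd2 a b c d \<longleftrightarrow> (\<forall>x y. quad2 a b c d x y \<in> \<real> \<and> 0 \<le> Re (quad2 a b c d x y))"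

lemma psd_psd2:
  fixes A :: op1
  assumes "psd A" shows "psd2 (A$False$False) (A$False$True) (A$True$False) (A$True$True)"
  unfolding psd2_def
proof (intro allI)
  fix x y
  let ?v = "(\<chi> i. if i then y else x) :: complex^bool"
  have "cinner ?v (A *v ?v) = quad2 (A$False$False) (A$False$True) (A$True$False) (A$True$True) x y"
    by (simp add: cinner_def matrix_vector_mult_def sum_bool quad2_def algebra_simps)
  then show "quad2 (A$False$False) (A$False$True) (A$True$False) (A$True$True) x y \<in> \<real> \<and>
    0 \<le> Re (quad2 (A$False$False) (A$False$True) (A$True$False) (A$True$True) x y)"
    using assms unfolding psd_def by metis
qed

lemma psd2_entries:
  assumes "psd2 a b c d"
  shows "Im a = 0" "Im d = 0" "0 \<le> Re a" "0 \<le> Re d" "c = cnj b" "(cmod b)^2 \<le> Re a * Re d"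
proof -
  have q: "quad2 a b c d x y \<in> \<real> \<and> 0 \<le> Re (quad2 a b c d x y)" for x y
    using assms unfolding psd2_def by blast
  from q[of 1 0] show "Im a = 0" "0 \<le> Re a" by (auto simp: quad2_def complex_is_Real_iff)
  from q[of 0 1] show "Im d = 0" "0 \<le> Re d" by (auto simp: quad2_def complex_is_Real_iff)
  have ia: "Im a = 0" and id: "Im d = 0" using q[of 1 0] q[of 0 1] by (auto simp: quad2_def complex_is_Real_iff)
  from q[of 1 1] have e1: "Im b + Im c = 0" using ia id by (auto simp: quad2_def complex_is_Real_iff)
  from q[of 1 "\<i>"] have e2: "Re b - Re c = 0" using ia id by (auto simp: quad2_def complex_is_Real_iff)
  show cb: "c = cnj b" using e1 e2 by (simp add: complex_eq_iff)
  show "(cmod b)^2 \<le> Re a * Re d"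
  proof (cases "Re d > 0")
    case True
    have "0 \<le> Re (quad2 a b c d (of_real (Re d)) (- cnj b))" using q by blast
    also have "Re (quad2 a b c d (of_real (Re d)) (- cnj b)) = Re d * (Re a * Re d - (cmod b)^2)"
      using ia id cb unfolding cmod_power2
      by (simp add: quad2_def algebra_simps power2_eq_square)
    finally show ?thesis using True by (simp add: zero_le_mult_iff)
  next
    case False
    then have d0: "Re d = 0" using q[of 0 1] by (auto simp: quad2_def)
    have "0 \<le> Re (quad2 a b c d 1 (- of_real t * cnj b))" for t using q by blast
    moreover have "Re (quad2 a b c d 1 (- of_real t * cnj b)) = Re a - 2 * t * (cmod b)^2" for t
      using ia id cb d0 unfolding cmod_power2
      by (simp add: quad2_def algebra_simps power2_eq_square)
    ultimately have h: "0 \<le> Re a - 2 * t * (cmod b)^2" for t by metis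
    have "cmod b = 0"
    proof (rule ccontr)
      assume "cmod b \<noteq> 0"
      then have "(cmod b)^2 > 0" by simp
      moreover have "0 \<le> Re a" using q[of 1 0] by (auto simp: quad2_def)
      ultimately have "Re a * (cmod b)^2 \<ge> 0" by simp
      with \<open>(cmod b)^2 > 0\<close> h[of "(Re a + 1) / (cmod b)^2"] have "2 * (cmod b)^2 \<le> - (Re a * (cmod b)^2)" by (simp add: field_simps)
      with \<open>(cmod b)^2 > 0\<close> \<open>Re a * (cmod b)^2 \<ge> 0\<close> show False by linarith
    qed
    then show ?thesis using d0 by simp
  qed
qed

lemma tr_pos:
  assumes "psd2 a b c d" "psd2 e f g h"
  shows "0 \<le> Re (a*e + b*g + c*f + d*h)"
proof -
  note A = psd2_entries[OF assms(1)] and B = psd2_entries[OF assms(2)]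
  define X where "X = Re b * Re f + Im b * Im f"
  have re: "Re (a*e + b*g + c*f + d*h) = Re a * Re e + Re d * Re h + 2 * X"
    using A B by (simp add: X_def)
  have "(cmod b)^2*(cmod f)^2 - X^2 = (Re b * Im f - Im b * Re f)^2"
    unfolding X_def cmod_power2 by (simp add: power2_eq_square algebra_simps)
  then have "X^2 \<le> (cmod b)^2 * (cmod f)^2"
    by (metis diff_ge_0_iff_ge zero_le_power2)
  also have "\<dots> \<le> (Re a * Re d) * (Re e * Re h)"
    using A B by (intro mult_mono) auto
  finally have x2: "X^2 \<le> (Re a * Re d) * (Re e * Re h)" .
  have "4 * ((Re a * Re d) * (Re e * Re h)) \<le> (Re a * Re e + Re d * Re h)^2"
    using sum_squares_ge_zero[of "Re a * Re e - Re d * Re h" 0]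
    by (simp add: power2_eq_square algebra_simps)
  with x2 have "(2*X)^2 \<le> (Re a * Re e + Re d * Re h)^2" by (simp add: power_mult_distrib)
  then have "\<bar>2*X\<bar> \<le> \<bar>Re a * Re e + Re d * Re h\<bar>"
    by (simp only: abs_le_square_iff)
  moreover have "Re a * Re e + Re d * Re h \<ge> 0" using A B by simp
  ultimately have "\<bar>2*X\<bar> \<le> Re a * Re e + Re d * Re h" by simp
  then show ?thesis using re by linarith
qed

definition ptq :: "op2 \<Rightarrow> (bool\<times>bool \<Rightarrow> real) \<Rightarrow> complex" where
  "ptq M w = (\<Sum>p\<in>UNIV. \<Sum>q\<in>UNIV. of_real (w p * w q) * M$(fst p, snd q)$(fst q, snd p))"

lemma ptq_kron:
  assumes "psd A" "psd B"
  shows "0 \<le> Re (ptq (kron A B) w)"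
proof -
  define W where "W a b = complex_of_real (w (a,b))" for a b
  define G where "G b b' = (\<Sum>a\<in>UNIV. \<Sum>a'\<in>UNIV. W a b * A$a$a' * W a' b')" for b b'
  have cW: "cnj (W a b) = W a b" for a b by (simp add: W_def)
  have "psd2 (G False False) (G False True) (G True False) (G True True)"
    unfolding psd2_def
  proof (intro allI)
    fix x y
    have "quad2 (G False False) (G False True) (G True False) (G True True) x y =
      quad2 (A$False$False) (A$False$True) (A$True$False) (A$True$True)
        (W False False * x + W False True * y) (W True False * x + W True True * y)"
      by (simp add: quad2_def G_def sum_bool cW algebra_simps)
    moreover have "quad2 (A$False$False) (A$False$True) (A$True$False) (A$True$True) u v \<in> \<real> \<and>
      0 \<le> Re (quad2 (A$False$False) (A$False$True) (A$True$False) (A$True$True) u v)" for u v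
      using psd_psd2[OF assms(1)] unfolding psd2_def by blast
    ultimately show "quad2 (G False False) (G False True) (G True False) (G True True) x y \<in> \<real> \<and>
      0 \<le> Re (quad2 (G False False) (G False True) (G True False) (G True True) x y)"
      by simp
  qed
  from tr_pos[OF psd_psd2[OF assms(2)] this]
  have "0 \<le> Re (B$False$False * G False False + B$False$True * G True False + B$True$False * G False True + B$True$True * G True True)" .
  moreover have "ptq (kron A B) w = B$False$False * G False False + B$False$True * G True False + B$True$False * G False True + B$True$True * G True True"
    by (simp add: ptq_def kron_def G_def W_def sum_bb sum_bool algebra_simps)
  ultimately show ?thesis by simp
qed

lemma scaleR_entry: "((c::real) *\<^sub>R (M::op2))$i$j = of_real c * M$i$j"
  unfolding vector_scaleR_component by (simp add: scaleR_conv_of_real)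

lemma ptq_sum:
  assumes h: "\<forall>k<n. 0 \<le> c k \<and> psd (A k) \<and> psd (B k)"
  shows "0 \<le> Re (ptq (\<Sum>k<n. c k *\<^sub>R kron (A k) (B k)) w)"
proof -
  have "ptq (\<Sum>k<n. c k *\<^sub>R kron (A k) (B k)) w = (\<Sum>k<n. of_real (c k) * ptq (kron (A k) (B k)) w)"
    unfolding ptq_def sum_component scaleR_entry
    by (simp add: sum_distrib_left algebra_simps sum.swap[of _ "{..<n}"])
  then have "Re (ptq (\<Sum>k<n. c k *\<^sub>R kron (A k) (B k)) w) = (\<Sum>k<n. c k * Re (ptq (kron (A k) (B k)) w))"
    by (simp add: Re_sum)
  also have "\<dots> \<ge> 0"
    using h ptq_kron by (intro sum_nonneg mult_nonneg_nonneg) auto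
  finally show ?thesis .
qed

lemma ptq_sep:
  assumes "separable M"
  shows "0 \<le> Re (ptq M w)"
  using assms unfolding separable_def
  by (elim exE conjE) (simp add: ptq_sum)


lemma mv_add: "(A::'a::comm_ring_1^'n^'m) *v (x + y) = A *v x + A *v y"
  by (simp add: vec_eq_iff matrix_vector_mult_def sum.distrib algebra_simps)

lemma mv_smult: "(A::'a::comm_ring_1^'n^'m) *v (c *s x) = c *s (A *v x)"
  by (simp add: vec_eq_iff matrix_vector_mult_def sum_distrib_left algebra_simps)

lemma cinner_add_right: "cinner z (x + y) = cinner z x + cinner z y"
  by (simp add: cinner_def sum.distrib algebra_simps)

lemma cinner_smult_right: "cinner z (c *s x) = c * cinner z x"
  by (simp add: cinner_def sum_distrib_left algebra_simps)

lemma cinner_adj: "cinner (A *v x) y = cinner x (adjoint_mat A *v y)"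
proof -
  have "cinner (A *v x) y = (\<Sum>i\<in>UNIV. \<Sum>j\<in>UNIV. cnj (A$i$j) * cnj (x$j) * y$i)"
    by (simp add: cinner_def matrix_vector_mult_def sum_distrib_right)
  also have "\<dots> = (\<Sum>j\<in>UNIV. \<Sum>i\<in>UNIV. cnj (A$i$j) * cnj (x$j) * y$i)"
    by (rule sum.swap)
  also have "\<dots> = cinner x (adjoint_mat A *v y)"
    by (simp add: cinner_def adjoint_mat_def matrix_vector_mult_def sum_distrib_left mult_ac)
  finally show ?thesis .
qed

lemma cinner_self_eq0: "cinner u u = 0 \<Longrightarrow> u = 0"
proof -
  assume h: "cinner u u = 0"
  have "cinner u u = of_real (\<Sum>i\<in>UNIV. (cmod (u$i))^2)"
    unfolding cinner_def of_real_sum complex_norm_square by (simp add: mult.commute)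
  with h have "(\<Sum>i\<in>UNIV. (cmod (u$i))^2) = 0" by (metis of_real_eq_0_iff)
  then have "\<forall>i\<in>UNIV. (cmod (u$i))^2 = 0"
    by (subst sum_nonneg_eq_0_iff[symmetric]) auto
  then show "u = 0" by (simp add: vec_eq_iff)
qed

lemma proj_in:
  assumes "is_projector_onto P (span2 u1 u2)"
  shows "P *v (x *s u1 + y *s u2) = x *s u1 + y *s u2"
proof -
  have "x *s u1 + y *s u2 \<in> range (\<lambda>v. P *v v)"
    using assms unfolding is_projector_onto_def span2_def by auto
  then obtain t where t: "x *s u1 + y *s u2 = P *v t" by auto
  have "P *v (P *v t) = (P ** P) *v t" by (simp add: matrix_vector_mul_assoc)
  also have "\<dots> = P *v t" using assms unfolding is_projector_onto_def by simp
  finally show ?thesis using t by simp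
qed

lemma proj_out:
  assumes "is_projector_onto P (span2 u1 u2)" "cinner z u1 = 0" "cinner z u2 = 0"
  shows "P *v z = 0"
proof -
  have "P *v z \<in> span2 u1 u2"
    using assms(1) unfolding is_projector_onto_def by blast
  then obtain x y where xy: "P *v z = x *s u1 + y *s u2" unfolding span2_def by auto
  have c0: "cinner z (P *v z) = 0"
    unfolding xy cinner_add_right cinner_smult_right using assms(2,3) by simp
  have "cinner (P *v z) (P *v z) = cinner z (adjoint_mat P *v (P *v z))"
    by (rule cinner_adj)
  also have "\<dots> = cinner z (P *v (P *v z))"
    using assms(1) unfolding is_projector_onto_def hermitian_def by simp
  also have "P *v (P *v z) = P *v z"
    using assms(1) unfolding is_projector_onto_def by (simp add: matrix_vector_mul_assoc)
  finally show ?thesis using c0 cinner_self_eq0 by simp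
qed


definition rt2 :: real where "rt2 = 1 / sqrt 2"

lemma rt2_sq: "rt2 * rt2 = 1/2"
  by (simp add: rt2_def field_simps)

definition cmp :: "real \<Rightarrow> real \<Rightarrow> nat \<Rightarrow> bool \<times> bool \<Rightarrow> real" where
  "cmp a b k p =
    (if k = 1 then (if p = (False,False) then cos a else if p = (True,True) then - sin a else 0)
     else if k = 2 then (if p = (False,True) then cos b else if p = (True,False) then - sin b else 0)
     else if k = 3 then rt2 * (if p = (False,False) then sin a else if p = (False,True) then sin b
                                        else if p = (True,False) then cos b else cos a)
     else rt2 * (if p = (False,False) then sin a else if p = (False,True) then - sin b
                                        else if p = (True,False) then - cos b else cos a))"

lemma basisA_cmp: "basisA a b k = (\<chi> p. complex_of_real (cmp a b k p))"
  unfolding vec_eq_iff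
proof
  fix p :: "bool \<times> bool"
  obtain x y where p: "p = (x, y)" by (cases p)
  show "basisA a b k $ p = (\<chi> p. complex_of_real (cmp a b k p)) $ p"
    unfolding p
    by (cases x; cases y) (simp_all add: basisA_def cmp_def phi_minus_def psi_minus_def phi_plus_def
          psi_plus_def ket2_def rt2_def algebra_simps)
qed

lemma s2: "(1 / sqrt 2) * (1 / sqrt 2) = (1/2::real)"
  by (simp add: field_simps)

lemma cmp_orth:
  assumes "k \<in> {1,2,3,4}" "m \<in> {1,2,3,4}"
  shows "(\<Sum>p\<in>UNIV. cmp a b k p * cmp a b m p) = (if k = m then 1 else 0)"
proof -
  have sc: "(sin t)^2 + (cos t)^2 = 1" for t :: real by simp
  show ?thesis using assms
    apply (simp add: sum_bb cmp_def)
    apply (elim disjE; simp add: rt2_def field_simps power2_eq_square[symmetric])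
    apply (use sin_cos_squared_add[of a] sin_cos_squared_add[of b] in linarith)+
    done
qed

lemma cmp_col:
  "(\<Sum>k\<in>{1,2,3,4::nat}. cmp a b k p * cmp a b k q) = (if p = q then 1 else 0)"
proof -
  obtain x y where p: "p = (x, y)" by (cases p)
  obtain x' y' where q: "q = (x', y')" by (cases q)
  show ?thesis unfolding p q
    by (cases x; cases y; cases x'; cases y'; simp add: cmp_def rt2_def field_simps power2_eq_square[symmetric])
qed


lemma mv_sum: "finite S \<Longrightarrow> (A::'a::comm_ring_1^'n^'m) *v (\<Sum>m\<in>S. f m) = (\<Sum>m\<in>S. A *v f m)"
  by (induction S rule: finite_induct) (simp_all add: mv_add)

lemma cinner_basis:
  assumes "k \<in> {1,2,3,4}" "m \<in> {1,2,3,4}"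
  shows "cinner (basisA a b k) (basisA a b m) = (if k = m then 1 else 0)"
proof -
  have "cinner (basisA a b k) (basisA a b m) = of_real (\<Sum>p\<in>UNIV. cmp a b k p * cmp a b m p)"
    by (simp add: cinner_def basisA_cmp)
  then show ?thesis using cmp_orth[OF assms] by simp
qed

lemma P_act:
  assumes proj: "is_projector_onto P (span2 (basisA a b i) (basisA a b j))"
    and ij: "i \<in> {1,2,3,4}" "j \<in> {1,2,3,4}" "i \<noteq> j" and m: "m \<in> {1,2,3,4}"
  shows "P *v basisA a b m = (if m = i \<or> m = j then basisA a b m else 0)"
proof (cases "m = i \<or> m = j")
  case True
  then show ?thesis
  proof
    assume "m = i"
    then show ?thesis using proj_in[OF proj, of 1 0] by simp
  next
    assume "m = j"
    then show ?thesis using proj_in[OF proj, of 0 1] by simp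
  qed
next
  case False
  then show ?thesis using proj_out[OF proj] cinner_basis[OF m ij(1)] cinner_basis[OF m ij(2)] by simp
qed

lemma P_entry:
  assumes proj: "is_projector_onto P (span2 (basisA a b i) (basisA a b j))"
    and ij: "i \<in> {1,2,3,4}" "j \<in> {1,2,3,4}" "i \<noteq> j"
  shows "P$p$q = of_real (\<Sum>m\<in>{1,2,3,4::nat}. if m = i \<or> m = j then cmp a b m p * cmp a b m q else 0)"
proof -
  define e :: qvec2 where "e = (\<chi> r. if r = q then 1 else 0)"
  have Pe: "P$p$q = (P *v e)$p"
  proof -
    have "(P *v e)$p = (\<Sum>r\<in>UNIV. if r = q then P$p$r else 0)"
      unfolding e_def matrix_vector_mult_def vec_lambda_beta by (rule sum.cong) auto
    then show ?thesis by simp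
  qed
  have e: "e = (\<Sum>m\<in>{1,2,3,4::nat}. complex_of_real (cmp a b m q) *s basisA a b m)"
  proof -
    have "(\<Sum>m\<in>{1,2,3,4::nat}. complex_of_real (cmp a b m q) *s basisA a b m) $ r =
      of_real (\<Sum>m\<in>{1,2,3,4::nat}. cmp a b m r * cmp a b m q)" for r
      unfolding basisA_cmp sum_component of_real_sum by (simp add: mult.commute)
    then show ?thesis unfolding e_def vec_eq_iff cmp_col by auto
  qed
  have "P *v e = (\<Sum>m\<in>{1,2,3,4::nat}. complex_of_real (cmp a b m q) *s (P *v basisA a b m))"
    unfolding e by (simp add: mv_sum mv_smult del: insert_iff)
  also have "\<dots> = (\<Sum>m\<in>{1,2,3,4::nat}. complex_of_real (cmp a b m q) *s (if m = i \<or> m = j then basisA a b m else 0))"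
    by (rule sum.cong) (use P_act[OF proj ij] in auto)
  finally have "(P *v e)$p = (\<Sum>m\<in>{1,2,3,4::nat}. complex_of_real (cmp a b m q) * (if m = i \<or> m = j then basisA a b m $ p else 0))"
    by (simp add: if_distrib cong: if_cong)
  also have "\<dots> = of_real (\<Sum>m\<in>{1,2,3,4::nat}. if m = i \<or> m = j then cmp a b m p * cmp a b m q else 0)"
    unfolding of_real_sum by (rule sum.cong) (auto simp: basisA_cmp)
  finally show ?thesis using Pe by simp
qed


definition Rm :: "real \<Rightarrow> real \<Rightarrow> nat \<Rightarrow> nat \<Rightarrow> bool\<times>bool \<Rightarrow> bool\<times>bool \<Rightarrow> real" where
  "Rm a b i j p q = (\<Sum>m\<in>{1,2,3,4::nat}. if m = i \<or> m = j then cmp a b m p * cmp a b m q else 0)"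

definition ptr :: "(bool\<times>bool \<Rightarrow> bool\<times>bool \<Rightarrow> real) \<Rightarrow> (bool\<times>bool \<Rightarrow> real) \<Rightarrow> real" where
  "ptr R w = (\<Sum>p\<in>UNIV. \<Sum>q\<in>UNIV. w p * w q * R (fst p, snd q) (fst q, snd p))"

lemma ptq_P:
  assumes proj: "is_projector_onto P (span2 (basisA a b i) (basisA a b j))"
    and ij: "i \<in> {1,2,3,4}" "j \<in> {1,2,3,4}" "i \<noteq> j"
  shows "Re (ptq P w) = ptr (Rm a b i j) w"
  unfolding ptq_def ptr_def P_entry[OF assms] Rm_def
  by (simp add: Re_sum)

lemma c13:
  fixes a b :: real
  defines "t \<equiv> sin b + cos b"
  shows "ptr (Rm a b 1 3) (\<lambda>p. if p = (False,False) then sin a * t else if p = (True,True) then cos a * t else -1)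
     = (sin a * cos a + sin b * cos b) * (sin a * cos a * t^2 - 1)"
proof -
  have e1: "sin a ^2 + cos a ^2 = 1" and e2: "sin b ^2 + cos b ^2 = 1" by simp_all
  show ?thesis unfolding t_def
    apply (simp add: ptr_def Rm_def sum_bb cmp_def)
    using rt2_sq e1 e2 by (algebra | simp add: power2_eq_square)
qed

lemma c14:
  fixes a b :: real 
  defines "t \<equiv> sin b + cos b"
  shows "ptr (Rm a b 1 4) (\<lambda>p. if p = (False,False) then sin a * t else if p = (True,True) then cos a * t else 1) = (sin a * cos a + sin b * cos b) * (sin a * cos a * t^2 - 1)"
proof -
  have e1: "sin a ^2 + cos a ^2 = 1" and e2: "sin b ^2 + cos b ^2 = 1" by simp_all
  show ?thesis unfolding t_def
    apply (simp add: ptr_def Rm_def sum_bb cmp_def)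
    using rt2_sq e1 e2 by (algebra | simp add: power2_eq_square)
qed

lemma c23:
  fixes a b :: real 
  defines "t \<equiv> sin a + cos a"
  shows "ptr (Rm a b 2 3) (\<lambda>p. if p = (False,True) then sin b * t else if p = (True,False) then cos b * t else -1) = (sin a * cos a + sin b * cos b) * (sin b * cos b * t^2 - 1)"
proof -
  have e1: "sin a ^2 + cos a ^2 = 1" and e2: "sin b ^2 + cos b ^2 = 1" by simp_all
  show ?thesis unfolding t_def
    apply (simp add: ptr_def Rm_def sum_bb cmp_def)
    using rt2_sq e1 e2 by (algebra | simp add: power2_eq_square)
qed

lemma c24:
  fixes a b :: real 
  defines "t \<equiv> sin a + cos a"
  shows "ptr (Rm a b 2 4) (\<lambda>p. if p = (False,True) then sin b * t else if p = (True,False) then cos b * t else 1) = (sin a * cos a + sin b * cos b) * (sin b * cos b * t^2 - 1)"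
proof -
  have e1: "sin a ^2 + cos a ^2 = 1" and e2: "sin b ^2 + cos b ^2 = 1" by simp_all
  show ?thesis unfolding t_def
    apply (simp add: ptr_def Rm_def sum_bb cmp_def)
    using rt2_sq e1 e2 by (algebra | simp add: power2_eq_square)
qed

lemma c12a:
  fixes a b :: real 
  shows "ptr (Rm a b 1 2) (\<lambda>p. if p = (False,False) then x else if p = (True,True) then y else 0) = (cos a)^2 * x^2 + 2 * (- (sin b * cos b)) * x * y + (sin a)^2 * y^2"
proof -
  have e1: "sin a ^2 + cos a ^2 = 1" and e2: "sin b ^2 + cos b ^2 = 1" by simp_all
  show ?thesis 
    apply (simp add: ptr_def Rm_def sum_bb cmp_def)
    using rt2_sq e1 e2 by (algebra | simp add: power2_eq_square)
qed

lemma c12b: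
  fixes a b :: real 
  shows "ptr (Rm a b 1 2) (\<lambda>p. if p = (False,True) then x else if p = (True,False) then y else 0) = (cos b)^2 * x^2 + 2 * (- (sin a * cos a)) * x * y + (sin b)^2 * y^2"
proof -
  have e1: "sin a ^2 + cos a ^2 = 1" and e2: "sin b ^2 + cos b ^2 = 1" by simp_all
  show ?thesis 
    apply (simp add: ptr_def Rm_def sum_bb cmp_def)
    using rt2_sq e1 e2 by (algebra | simp add: power2_eq_square)
qed

lemma c34a:
  fixes a b :: real 
  shows "ptr (Rm a b 3 4) (\<lambda>p. if p = (False,False) then x else if p = (True,True) then y else 0) = (sin a)^2 * x^2 + 2 * (sin b * cos b) * x * y + (cos a)^2 * y^2"
proof -
  have e1: "sin a ^2 + cos a ^2 = 1" and e2: "sin b ^2 + cos b ^2 = 1" by simp_all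
  show ?thesis 
    apply (simp add: ptr_def Rm_def sum_bb cmp_def)
    using rt2_sq e1 e2 by (algebra | simp add: power2_eq_square)
qed

lemma c34b:
  fixes a b :: real 
  shows "ptr (Rm a b 3 4) (\<lambda>p. if p = (False,True) then x else if p = (True,False) then y else 0) = (sin b)^2 * x^2 + 2 * (sin a * cos a) * x * y + (cos b)^2 * y^2"
proof -
  have e1: "sin a ^2 + cos a ^2 = 1" and e2: "sin b ^2 + cos b ^2 = 1" by simp_all
  show ?thesis 
    apply (simp add: ptr_def Rm_def sum_bb cmp_def)
    using rt2_sq e1 e2 by (algebra | simp add: power2_eq_square)
qed

lemma quad_det:
  fixes A B C :: real
  assumes h: "\<And>x y. 0 \<le> A * x^2 + 2 * C * x * y + B * y^2"
  shows "C^2 \<le> A * B"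
proof (cases "A > 0")
  case True
  have "0 \<le> A * (-C)^2 + 2 * C * (-C) * A + B * A^2" by (rule h)
  then have "0 \<le> A * (A * B - C^2)" by (simp add: power2_eq_square algebra_simps)
  with True show ?thesis by (simp add: zero_le_mult_iff)
next
  case False
  have A0: "A \<ge> 0" using h[of 1 0] by simp
  with False have "A = 0" by simp
  have "C = 0"
  proof (rule ccontr)
    assume "C \<noteq> 0"
    have "0 \<le> A * (-(B+1)/(2*C))^2 + 2 * C * (-(B+1)/(2*C)) * 1 + B * 1^2" by (rule h)
    also have "\<dots> = -1" using \<open>A = 0\<close> \<open>C \<noteq> 0\<close> by (simp add: field_simps)
    finally show False by simp
  qed
  then show ?thesis using A0 h[of 0 1] by simp
qed


lemma cos2_sq: "(cos (2*(x::real)))^2 = 1 - 4 * (sin x * cos x)^2"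
proof -
  have "(cos (2*x))^2 = ((cos x)^2 - (sin x)^2)^2" by (simp only: cos_double)
  also have "\<dots> = ((cos x)^2 + (sin x)^2)^2 - 4 * (sin x * cos x)^2"
    by algebra
  also have "\<dots> = 1 - 4 * (sin x * cos x)^2" by (simp only: sin_cos_squared_add2 power_one)
  finally show ?thesis .
qed

lemma sc_nonneg: "(x::real) \<in> {0..pi/2} \<Longrightarrow> 0 \<le> sin x * cos x"
  by (auto intro!: mult_nonneg_nonneg sin_ge_zero cos_ge_zero)

lemma sc_half: "sin (x::real) * cos x \<le> 1/2"
proof -
  have "0 \<le> (sin x - cos x)^2" by simp
  then have "0 \<le> (sin x)^2 + (cos x)^2 - 2 * (sin x * cos x)" by (simp add: power2_eq_square algebra_simps)
  then show ?thesis by simp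
qed

lemma T1:
  assumes a: "\<alpha> \<in> {0..pi/2}" and b: "\<beta> \<in> {0..pi/2}" and ne: "\<alpha> \<noteq> \<beta>" "\<alpha> \<noteq> pi/2 - \<beta>"
  shows "sin \<alpha> * cos \<alpha> \<noteq> sin \<beta> * cos \<beta>"
proof
  assume h: "sin \<alpha> * cos \<alpha> = sin \<beta> * cos \<beta>"
  have "(cos (2*\<alpha>))^2 = (cos (2*\<beta>))^2" unfolding cos2_sq h ..
  then have "cos (2*\<alpha>) = cos (2*\<beta>) \<or> cos (2*\<alpha>) = - cos (2*\<beta>)" by (simp add: power2_eq_iff)
  then show False
  proof
    assume c: "cos (2*\<alpha>) = cos (2*\<beta>)"
    have "2*\<alpha> = 2*\<beta>" by (rule cos_inj_pi) (use a b c in auto)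
    then show False using ne by simp
  next
    assume "cos (2*\<alpha>) = - cos (2*\<beta>)"
    then have c: "cos (2*\<alpha>) = cos (pi - 2*\<beta>)" by simp
    have "2*\<alpha> = pi - 2*\<beta>" by (rule cos_inj_pi) (use a b c in auto)
    then show False using ne by simp
  qed
qed

lemma sc_zero:
  assumes a: "\<alpha> \<in> {0..pi/2}" and "sin \<alpha> * cos \<alpha> = 0"
  shows "\<alpha> = 0 \<or> \<alpha> = pi/2"
proof -
  have "(cos (2*\<alpha>))^2 = 1" unfolding cos2_sq assms(2) by simp
  then have "cos (2*\<alpha>) = cos 0 \<or> cos (2*\<alpha>) = cos pi" by (simp add: power2_eq_1_iff)
  then show ?thesis
  proof
    assume c: "cos (2*\<alpha>) = cos 0"
    have "2*\<alpha> = 0" by (rule cos_inj_pi) (use a c in auto)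
    then show ?thesis by simp
  next
    assume c: "cos (2*\<alpha>) = cos pi"
    have "2*\<alpha> = pi" by (rule cos_inj_pi) (use a c in auto)
    then show ?thesis by simp
  qed
qed

lemma T2:
  assumes a: "\<alpha> \<in> {0..pi/2}" and b: "\<beta> \<in> {0..pi/2}" and ne: "\<alpha> \<noteq> \<beta>" "\<alpha> \<noteq> pi/2 - \<beta>"
  shows "0 < sin \<alpha> * cos \<alpha> + sin \<beta> * cos \<beta>"
proof (rule ccontr)
  assume "\<not> ?thesis"
  with sc_nonneg[OF a] sc_nonneg[OF b]
  have "sin \<alpha> * cos \<alpha> = 0" "sin \<beta> * cos \<beta> = 0" by linarith+
  from sc_zero[OF a this(1)] sc_zero[OF b this(2)] ne show False by auto
qed

lemma T3:
  assumes a: "\<alpha> \<in> {0..pi/2}" and b: "\<beta> \<in> {0..pi/2}" and ne: "\<alpha> \<noteq> \<beta>" "\<alpha> \<noteq> pi/2 - \<beta>"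
  shows "sin \<alpha> * cos \<alpha> * (sin \<beta> + cos \<beta>)^2 < 1"
proof (rule ccontr)
  define x where "x = sin \<alpha> * cos \<alpha>"
  define y where "y = sin \<beta> * cos \<beta>"
  have t: "(sin \<beta> + cos \<beta>)^2 = 1 + 2*y"
  proof -
    have "(sin \<beta> + cos \<beta>)^2 = ((sin \<beta>)^2 + (cos \<beta>)^2) + 2*y"
      by (simp add: y_def power2_eq_square algebra_simps)
    then show ?thesis by simp
  qed
  assume "\<not> ?thesis"
  then have h: "1 \<le> x * (1 + 2*y)" unfolding t x_def by simp
  have x0: "0 \<le> x" "x \<le> 1/2" using sc_nonneg[OF a] sc_half unfolding x_def by auto
  have y0: "0 \<le> y" "y \<le> 1/2" using sc_nonneg[OF b] sc_half unfolding y_def by auto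
  have "0 \<le> (1/2 - x) * (1 + 2*y)" using x0 y0 by simp
  then have "x * (1 + 2*y) \<le> 1/2 + y" by (simp add: algebra_simps)
  with h have "y = 1/2" using y0 by linarith
  with h have "x = 1/2" using x0 by simp
  with \<open>y = 1/2\<close> T1[OF a b ne] show False unfolding x_def y_def by simp
qed

lemma Rm_sym: "Rm a b i j = Rm a b j i"
  unfolding Rm_def by (simp add: disj_commute)


lemma sq_eq_contra:
  assumes a: "\<alpha> \<in> {0..pi/2}" and b: "\<beta> \<in> {0..pi/2}" and ne: "\<alpha> \<noteq> \<beta>" "\<alpha> \<noteq> pi/2 - \<beta>"
    and h1: "(sin \<alpha> * cos \<alpha>)^2 \<le> (sin \<beta> * cos \<beta>)^2" and h2: "(sin \<beta> * cos \<beta>)^2 \<le> (sin \<alpha> * cos \<alpha>)^2"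
  shows False
proof -
  have "(sin \<alpha> * cos \<alpha>)^2 = (sin \<beta> * cos \<beta>)^2" using h1 h2 by simp
  then have "sin \<alpha> * cos \<alpha> = sin \<beta> * cos \<beta>"
    using sc_nonneg[OF a] sc_nonneg[OF b] by simp
  with T1[OF a b ne] show False by simp
qed

theorem proposition1:
  fixes \<alpha> \<beta> :: real and i j :: nat and P :: op2
  assumes "\<alpha> \<in> {0..pi/2}" and "\<beta> \<in> {0..pi/2}"
    and "\<alpha> \<noteq> \<beta>" and "\<alpha> \<noteq> pi/2 - \<beta>"
    and "i \<in> {1..4}" and "j \<in> {1..4}" and "i \<noteq> j"
    and "is_projector_onto P (span2 (basisA \<alpha> \<beta> i) (basisA \<alpha> \<beta> j))"
  shows "\<not> separable P"
proof
  assume sep: "separable P"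
  note a = assms(1) and b = assms(2) and ne = assms(3,4)
  have i4: "i \<in> {1,2,3,4}" and j4: "j \<in> {1,2,3,4}" using assms(5,6) by auto
  have pos: "0 \<le> ptr (Rm \<alpha> \<beta> i j) w" for w
    using ptq_sep[OF sep, of w] ptq_P[OF assms(8) i4 j4 assms(7)] by simp
  have pos': "0 \<le> ptr (Rm \<alpha> \<beta> (min i j) (max i j)) w" for w
    using pos[of w] Rm_sym[of \<alpha> \<beta> i j] by (cases "i \<le> j") (simp_all add: min_def max_def)
  have "(min i j, max i j) \<in> {(1,2),(1,3),(1,4),(2,3),(2,4),(3,4)}"
    using i4 j4 assms(7) by auto
  then show False
  proof (elim insertE emptyE)
    assume e: "(min i j, max i j) = (1, 2)"
    have p: "0 \<le> ptr (Rm \<alpha> \<beta> 1 2) w" for w using pos'[of w] e by simp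
    have h1: "(- (sin \<beta> * cos \<beta>))^2 \<le> (cos \<alpha>)^2 * (sin \<alpha>)^2"
    proof -
      have "0 \<le> (cos \<alpha>)^2 * x^2 + 2 * (- (sin \<beta> * cos \<beta>)) * x * y + (sin \<alpha>)^2 * y^2" for x y
        using p[of "\<lambda>p. if p = (False,False) then x else if p = (True,True) then y else 0"] by (simp only: c12a)
      then show ?thesis by (rule quad_det)
    qed
    have h2: "(- (sin \<alpha> * cos \<alpha>))^2 \<le> (cos \<beta>)^2 * (sin \<beta>)^2"
    proof -
      have "0 \<le> (cos \<beta>)^2 * x^2 + 2 * (- (sin \<alpha> * cos \<alpha>)) * x * y + (sin \<beta>)^2 * y^2" for x y
        using p[of "\<lambda>p. if p = (False,True) then x else if p = (True,False) then y else 0"] by (simp only: c12b)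
      then show ?thesis by (rule quad_det)
    qed
    show False
      by (rule sq_eq_contra[OF a b ne]) (use h1 h2 in \<open>simp_all add: power_mult_distrib mult.commute\<close>)
  next
    assume e: "(min i j, max i j) = (3, 4)"
    have p: "0 \<le> ptr (Rm \<alpha> \<beta> 3 4) w" for w using pos'[of w] e by simp
    have h1: "(sin \<beta> * cos \<beta>)^2 \<le> (sin \<alpha>)^2 * (cos \<alpha>)^2"
    proof -
      have "0 \<le> (sin \<alpha>)^2 * x^2 + 2 * (sin \<beta> * cos \<beta>) * x * y + (cos \<alpha>)^2 * y^2" for x y
        using p[of "\<lambda>p. if p = (False,False) then x else if p = (True,True) then y else 0"] by (simp only: c34a)
      then show ?thesis by (rule quad_det)
    qed
    have h2: "(sin \<alpha> * cos \<alpha>)^2 \<le> (sin \<beta>)^2 * (cos \<beta>)^2"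
    proof -
      have "0 \<le> (sin \<beta>)^2 * x^2 + 2 * (sin \<alpha> * cos \<alpha>) * x * y + (cos \<beta>)^2 * y^2" for x y
        using p[of "\<lambda>p. if p = (False,True) then x else if p = (True,False) then y else 0"] by (simp only: c34b)
      then show ?thesis by (rule quad_det)
    qed
    show False
      by (rule sq_eq_contra[OF a b ne]) (use h1 h2 in \<open>simp_all add: power_mult_distrib mult.commute\<close>)
  next
    assume e: "(min i j, max i j) = (1, 3)"
    have p: "0 \<le> ptr (Rm \<alpha> \<beta> 1 3) w" for w using pos'[of w] e by simp
    have "0 \<le> (sin \<alpha> * cos \<alpha> + sin \<beta> * cos \<beta>) * (sin \<alpha> * cos \<alpha> * (sin \<beta> + cos \<beta>)^2 - 1)"
      using p[of "\<lambda>p. if p = (False,False) then sin \<alpha> * (sin \<beta> + cos \<beta>) else if p = (True,True) then cos \<alpha> * (sin \<beta> + cos \<beta>) else -1"] by (simp only: c13)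
    with T2[OF a b ne] T3[OF a b ne] show False by (simp add: zero_le_mult_iff)
  next
    assume e: "(min i j, max i j) = (1, 4)"
    have p: "0 \<le> ptr (Rm \<alpha> \<beta> 1 4) w" for w using pos'[of w] e by simp
    have "0 \<le> (sin \<alpha> * cos \<alpha> + sin \<beta> * cos \<beta>) * (sin \<alpha> * cos \<alpha> * (sin \<beta> + cos \<beta>)^2 - 1)"
      using p[of "\<lambda>p. if p = (False,False) then sin \<alpha> * (sin \<beta> + cos \<beta>) else if p = (True,True) then cos \<alpha> * (sin \<beta> + cos \<beta>) else 1"] by (simp only: c14)
    with T2[OF a b ne] T3[OF a b ne] show False by (simp add: zero_le_mult_iff)
  next
    have ne': "\<beta> \<noteq> \<alpha>" "\<beta> \<noteq> pi/2 - \<alpha>" using ne by auto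
    assume e: "(min i j, max i j) = (2, 3)"
    have p: "0 \<le> ptr (Rm \<alpha> \<beta> 2 3) w" for w using pos'[of w] e by simp
    have "0 \<le> (sin \<alpha> * cos \<alpha> + sin \<beta> * cos \<beta>) * (sin \<beta> * cos \<beta> * (sin \<alpha> + cos \<alpha>)^2 - 1)"
      using p[of "\<lambda>p. if p = (False,True) then sin \<beta> * (sin \<alpha> + cos \<alpha>) else if p = (True,False) then cos \<beta> * (sin \<alpha> + cos \<alpha>) else -1"] by (simp only: c23)
    with T2[OF a b ne] T3[OF b a ne'] show False by (simp add: zero_le_mult_iff)
  next
    have ne': "\<beta> \<noteq> \<alpha>" "\<beta> \<noteq> pi/2 - \<alpha>" using ne by auto
    assume e: "(min i j, max i j) = (2, 4)"
    have p: "0 \<le> ptr (Rm \<alpha> \<beta> 2 4) w" for w using pos'[of w] e by simp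
    have "0 \<le> (sin \<alpha> * cos \<alpha> + sin \<beta> * cos \<beta>) * (sin \<beta> * cos \<beta> * (sin \<alpha> + cos \<alpha>)^2 - 1)"
      using p[of "\<lambda>p. if p = (False,True) then sin \<beta> * (sin \<alpha> + cos \<alpha>) else if p = (True,False) then cos \<beta> * (sin \<alpha> + cos \<alpha>) else 1"] by (simp only: c24)
    with T2[OF a b ne] T3[OF b a ne'] show False by (simp add: zero_le_mult_iff)
  qed
qed

end
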